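(* In the setup described in the context, suppose the Ricci tensor of $(M,g,Q)$ is $$\rho=\frac{3\tau+\tau^*}{8}g+\frac{3\tau^*+\tau}{8}\tilde g .$$ Then the curvature tensor is $$R=\frac{\tau+\tau^*}{4}\pi_1+\frac{3\tau^*+\tau}{8}\pi_2,$$ where $$\pi_1(x,y,z,u)=g(y,z)g(x,u)-g(x,z)g(y,u),$$ $$\pi_2(x,y,z,u)=g(y,z)\tilde g(x,u)+g(x,u)\tilde g(y,z)-g(x,z)\tilde g(y,u)-g(y,u)\tilde g(x,z).$$
   Context: Let $M$ be a 3-dimensional smooth manifold. Fix a coordinate chart $(x^1,x^2,x^3)$ with coordinate vector fields $\partial_i$. Structures: - $g$ is a Riemannian metric with $g(\partial_1,\partial_1)=g(\partial_2,\partial_2)=A$, $g(\partial_3,\partial_3)=B$ and $g(\partial_i,\partial_j)=0$ for $i\ne j$. Here $A,B$ are smooth positive functions. - $Q$ is the $(1,1)$-tensor field with $Q\partial_1=\partial_2$, $Q\partial_2=-\partial_1$, $Q\partial_3=\partial_3$. - $P=Q^2$ and $\tilde g(x,y)=g(x,Py)$. Curvature: - $\nabla$ is the Levi-Civita connection of $g$. - $R(x,y)z=\nabla_x\nabla_yz-\nabla_y\nabla_xz-\nabla_{[x,y]}z$, and $R$ also denotes the $(0,4)$-tensor $R(x,y,z,t)=g(R(x,y)z,t)$. - $\rho(y,z)=g^{ij}R(e_i,y,z,e_j)$, $\tau=g^{ij}\rho_{ij}$ and $\tau^*=\tilde g^{ij}\rho_{ij}$. *)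

theory Defs
  imports "HOL-Analysis.Analysis"
begin

text \<open>Coordinates of the chart: points of an open set U of real^3.
  Index type 3 has elements 1, 2, 3 (where 3 = 0 in the numeral type).
  Tensors are represented by their components w.r.t. the coordinate frame \<partial>_i.\<close>

type_synonym pt = "real^3"
type_synonym mat3 = "real^3^3"

definition ee :: "3 \<Rightarrow> pt" where "ee i = axis i 1"

definition pd :: "3 \<Rightarrow> (pt \<Rightarrow> real) \<Rightarrow> pt \<Rightarrow> real" where
  "pd i f p = deriv (\<lambda>t. f (p + t *\<^sub>R ee i)) 0"

fun pds :: "3 list \<Rightarrow> (pt \<Rightarrow> real) \<Rightarrow> pt \<Rightarrow> real" where
  "pds [] f = f"
| "pds (i # is) f = pd i (pds is f)"

definition smooth_on :: "pt set \<Rightarrow> (pt \<Rightarrow> real) \<Rightarrow> bool" where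
  "smooth_on U f \<longleftrightarrow> (\<forall>is. continuous_on U (pds is f) \<and>
      (\<forall>i. \<forall>p\<in>U. (\<lambda>t. pds is f (p + t *\<^sub>R ee i)) differentiable (at 0)))"

definition gmat :: "(pt \<Rightarrow> real) \<Rightarrow> (pt \<Rightarrow> real) \<Rightarrow> pt \<Rightarrow> mat3" where
  "gmat A B p = (\<chi> i j. if i = j then (if i = 3 then B p else A p) else 0)"

text \<open>Q as a matrix: column j is Q \<partial>_j. Q\<partial>1 = \<partial>2, Q\<partial>2 = -\<partial>1, Q\<partial>3 = \<partial>3.\<close>
definition Qmat :: mat3 where
  "Qmat = (\<chi> i j. if i = 2 \<and> j = 1 then 1 else if i = 1 \<and> j = 2 then -1
                  else if i = 3 \<and> j = 3 then 1 else 0)"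

definition Pmat :: mat3 where "Pmat = Qmat ** Qmat"

text \<open>tilde g(x,y) = g(x, P y): components g(\<partial>_i, P \<partial>_j).\<close>
definition gtil :: "(pt \<Rightarrow> mat3) \<Rightarrow> pt \<Rightarrow> mat3" where
  "gtil G p = G p ** Pmat"

definition chr :: "(pt \<Rightarrow> mat3) \<Rightarrow> 3 \<Rightarrow> 3 \<Rightarrow> 3 \<Rightarrow> pt \<Rightarrow> real" where
  "chr G k i j p = (1/2) * (\<Sum>l\<in>UNIV. matrix_inv (G p) $ k $ l *
      (pd i (\<lambda>q. G q $ j $ l) p + pd j (\<lambda>q. G q $ i $ l) p - pd l (\<lambda>q. G q $ i $ j) p))"

text \<open>R(\<partial>_i,\<partial>_j)\<partial>_k = \<Sum>_l Rup i j k l \<partial>_l, with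
  R(x,y)z = \<nabla>_x\<nabla>_y z - \<nabla>_y\<nabla>_x z - \<nabla>_[x,y] z.\<close>
definition Rup :: "(pt \<Rightarrow> mat3) \<Rightarrow> 3 \<Rightarrow> 3 \<Rightarrow> 3 \<Rightarrow> 3 \<Rightarrow> pt \<Rightarrow> real" where
  "Rup G i j k l p = pd i (chr G l j k) p - pd j (chr G l i k) p
     + (\<Sum>m\<in>UNIV. chr G m j k p * chr G l i m p - chr G m i k p * chr G l j m p)"

definition Rlow :: "(pt \<Rightarrow> mat3) \<Rightarrow> 3 \<Rightarrow> 3 \<Rightarrow> 3 \<Rightarrow> 3 \<Rightarrow> pt \<Rightarrow> real" where
  "Rlow G i j k l p = (\<Sum>m\<in>UNIV. Rup G i j k m p * G p $ m $ l)"

definition ricci :: "(pt \<Rightarrow> mat3) \<Rightarrow> 3 \<Rightarrow> 3 \<Rightarrow> pt \<Rightarrow> real" where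
  "ricci G j k p = (\<Sum>a\<in>UNIV. \<Sum>b\<in>UNIV. matrix_inv (G p) $ a $ b * Rlow G a j k b p)"

definition scal :: "(pt \<Rightarrow> mat3) \<Rightarrow> pt \<Rightarrow> real" where
  "scal G p = (\<Sum>i\<in>UNIV. \<Sum>j\<in>UNIV. matrix_inv (G p) $ i $ j * ricci G i j p)"

definition scal_star :: "(pt \<Rightarrow> mat3) \<Rightarrow> pt \<Rightarrow> real" where
  "scal_star G p = (\<Sum>i\<in>UNIV. \<Sum>j\<in>UNIV. matrix_inv (gtil G p) $ i $ j * ricci G i j p)"

definition pi1 :: "mat3 \<Rightarrow> 3 \<Rightarrow> 3 \<Rightarrow> 3 \<Rightarrow> 3 \<Rightarrow> real" where
  "pi1 g x y z u = g $ y $ z * g $ x $ u - g $ x $ z * g $ y $ u"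

definition pi2 :: "mat3 \<Rightarrow> mat3 \<Rightarrow> 3 \<Rightarrow> 3 \<Rightarrow> 3 \<Rightarrow> 3 \<Rightarrow> real" where
  "pi2 g gt x y z u = g $ y $ z * gt $ x $ u + g $ x $ u * gt $ y $ z
                      - g $ x $ z * gt $ y $ u - g $ y $ u * gt $ x $ z"

end

theory Submission
  imports Defs
begin


lemma matrix_inv_eqI:
  fixes M D :: "real^'n^'n"
  assumes "M ** D = mat 1" "D ** M = mat 1"
  shows "matrix_inv M = D"
proof -
  have "\<exists>A'. M ** A' = mat 1 \<and> A' ** M = mat 1" using assms by blast
  then have h: "M ** matrix_inv M = mat 1 \<and> matrix_inv M ** M = mat 1"
    unfolding matrix_inv_def by (rule someI_ex)
  have "matrix_inv M = matrix_inv M ** (M ** D)" using assms by (simp add: matrix_mul_rid)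
  also have "\<dots> = (matrix_inv M ** M) ** D" by (simp add: matrix_mul_assoc)
  also have "\<dots> = D" using h by (simp add: matrix_mul_lid)
  finally show ?thesis .
qed

definition gd :: "(pt \<Rightarrow> real) \<Rightarrow> (pt \<Rightarrow> real) \<Rightarrow> 3 \<Rightarrow> pt \<Rightarrow> real" where
  "gd A B k = (if k = 3 then B else A)"

lemma gmat_eq: "gmat A B q $ i $ j = (if i = j then gd A B i q else 0)"
  by (simp add: gmat_def gd_def)

lemma diag_inv:
  fixes d :: "3 \<Rightarrow> real"
  assumes "\<And>i. d i \<noteq> 0"
  shows "matrix_inv (\<chi> i j. if i = j then d i else 0) = (\<chi> i j. if i = j then 1 / d i else 0)"
  apply (rule matrix_inv_eqI)
  using assms by (auto simp: matrix_matrix_mult_def mat_def vec_eq_iff sum_3 forall_3)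

lemma Pmat_eq: "Pmat = (\<chi> i j. if i = j then (if i = 3 then 1 else -1) else 0)"
  unfolding Pmat_def Qmat_def
  by (simp add: matrix_matrix_mult_def vec_eq_iff sum_3 forall_3)



definition hasd :: "3 \<Rightarrow> (pt \<Rightarrow> real) \<Rightarrow> pt \<Rightarrow> real \<Rightarrow> bool" where
  "hasd m f p v \<longleftrightarrow> ((\<lambda>t. f (p + t *\<^sub>R ee m)) has_real_derivative v) (at 0)"

lemma hasd_pd: "hasd m f p v \<Longrightarrow> pd m f p = v"
  unfolding hasd_def pd_def by (rule DERIV_imp_deriv)

lemma smooth_hasd:
  assumes "smooth_on U f" "p \<in> U"
  shows "hasd m (pds is f) p (pd m (pds is f) p)"
  using assms unfolding smooth_on_def hasd_def pd_def
  by (simp add: DERIV_deriv_iff_real_differentiable)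

lemma smooth_hasd0:
  assumes "smooth_on U f" "p \<in> U"
  shows "hasd m f p (pd m f p)"
  using smooth_hasd[OF assms, of m "[]"] by simp

lemma smooth_hasd1:
  assumes "smooth_on U f" "p \<in> U"
  shows "hasd m (pd i f) p (pd m (pd i f) p)"
  using smooth_hasd[OF assms, of m "[i]"] by simp

lemma ev_line:
  assumes "open U" "p \<in> U"
  shows "eventually (\<lambda>t. p + t *\<^sub>R ee m \<in> U) (nhds (0::real))"
proof -
  have "((\<lambda>t::real. p + t *\<^sub>R ee m) \<longlongrightarrow> p + 0 *\<^sub>R ee m) (nhds 0)"
    by (intro tendsto_intros filterlim_ident)
  then have "((\<lambda>t::real. p + t *\<^sub>R ee m) \<longlongrightarrow> p) (nhds 0)" by simp
  then show ?thesis using assms by (simp add: topological_tendstoD)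
qed

lemma pd_local:
  assumes "open U" "p \<in> U" "\<And>q. q \<in> U \<Longrightarrow> f q = g q"
  shows "pd m f p = pd m g p"
  unfolding pd_def
  by (rule deriv_cong_ev[OF eventually_mono[OF ev_line[OF assms(1,2), of m]]]) (auto simp: assms(3))

lemma hasd_const: "hasd m (\<lambda>q. c) p 0"
  unfolding hasd_def by simp

lemma pd_const: "pd m (\<lambda>q. c) p = 0"
  by (rule hasd_pd[OF hasd_const])

lemma hasd_add: "hasd m f p a \<Longrightarrow> hasd m g p b \<Longrightarrow> hasd m (\<lambda>q. f q + g q) p (a + b)"
  unfolding hasd_def by (rule DERIV_add)
lemma hasd_diff: "hasd m f p a \<Longrightarrow> hasd m g p b \<Longrightarrow> hasd m (\<lambda>q. f q - g q) p (a - b)"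
  unfolding hasd_def by (rule DERIV_diff)
lemma hasd_cmult: "hasd m f p a \<Longrightarrow> hasd m (\<lambda>q. c * f q) p (c * a)"
  unfolding hasd_def by (rule DERIV_cmult)
lemma hasd_divide:
  assumes "hasd m f p a" "hasd m g p b" "g p \<noteq> 0"
  shows "hasd m (\<lambda>q. f q / g q) p ((a * g p - f p * b) / (g p * g p))"
  using DERIV_divide[OF assms(1,2)[unfolded hasd_def]] assms(3) by (simp add: hasd_def)



lemma norm_ee: "norm (ee i) = 1"
  by (simp add: ee_def)

lemma line_deriv:
  assumes "smooth_on U f" "q + s *\<^sub>R ee i \<in> U"
  shows "((\<lambda>s'. pds js f (q + s' *\<^sub>R ee i)) has_real_derivative pd i (pds js f) (q + s *\<^sub>R ee i)) (at s)"
proof -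
  have "hasd i (pds js f) (q + s *\<^sub>R ee i) (pd i (pds js f) (q + s *\<^sub>R ee i))"
    by (rule smooth_hasd[OF assms])
  then have "((\<lambda>t. pds js f (q + (t + s) *\<^sub>R ee i)) has_real_derivative pd i (pds js f) (q + s *\<^sub>R ee i)) (at 0)"
    unfolding hasd_def by (simp add: scaleR_add_left add_ac)
  then show ?thesis using DERIV_shift[of "\<lambda>s'. pds js f (q + s' *\<^sub>R ee i)" _ 0 s] by simp
qed

lemma dist_bound:
  assumes "0 \<le> s" "s \<le> t" "0 \<le> r" "r \<le> t"
  shows "dist (p + s *\<^sub>R ee i + r *\<^sub>R ee j) p \<le> 2 * t"
proof -
  have "dist (p + s *\<^sub>R ee i + r *\<^sub>R ee j) p = norm (s *\<^sub>R ee i + r *\<^sub>R ee j)"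
    by (simp add: dist_norm)
  also have "\<dots> \<le> norm (s *\<^sub>R ee i) + norm (r *\<^sub>R ee j)" by (rule norm_triangle_ineq)
  also have "\<dots> = s + r" using assms by (simp add: norm_ee)
  finally show ?thesis using assms by simp
qed

lemma clairaut_approx:
  assumes U: "open U" "p \<in> U" and sm: "smooth_on U f" and e: "e > 0"
  shows "\<exists>d>0. \<forall>t. 0 < t \<and> t < d \<longrightarrow>
    \<bar>(f (p + t *\<^sub>R ee i + t *\<^sub>R ee j) - f (p + t *\<^sub>R ee i) - f (p + t *\<^sub>R ee j) + f p) / t^2
       - pd j (pd i f) p\<bar> < e"
proof -
  obtain r where r: "r > 0" "ball p r \<subseteq> U" using U open_contains_ball by blast
  have "continuous_on U (pds [j, i] f)" using sm unfolding smooth_on_def by blast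
  then have "isCont (pds [j, i] f) p" using U continuous_on_eq_continuous_at by blast
  then obtain \<delta> where dl: "\<delta> > 0" "\<And>x'. dist x' p < \<delta> \<Longrightarrow> dist (pd j (pd i f) x') (pd j (pd i f) p) < e"
    using e unfolding continuous_at_eps_delta by auto
  define d where "d = min r \<delta> / 2"
  have d: "d > 0" using r dl by (simp add: d_def)
  have inU: "p + s *\<^sub>R ee i + r' *\<^sub>R ee j \<in> U" "dist (p + s *\<^sub>R ee i + r' *\<^sub>R ee j) p < \<delta>"
    if "0 \<le> s" "s \<le> t" "0 \<le> r'" "r' \<le> t" "t < d" for s r' t
  proof -
    have "dist (p + s *\<^sub>R ee i + r' *\<^sub>R ee j) p \<le> 2 * t" by (rule dist_bound) (use that in auto)
    moreover have "2 * t < min r \<delta>" using that by (simp add: d_def)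
    ultimately have "dist (p + s *\<^sub>R ee i + r' *\<^sub>R ee j) p < r"
       "dist (p + s *\<^sub>R ee i + r' *\<^sub>R ee j) p < \<delta>" by auto
    then show "p + s *\<^sub>R ee i + r' *\<^sub>R ee j \<in> U" "dist (p + s *\<^sub>R ee i + r' *\<^sub>R ee j) p < \<delta>"
      using r by (auto simp: dist_commute)
  qed
  have "\<forall>t. 0 < t \<and> t < d \<longrightarrow>
    \<bar>(f (p + t *\<^sub>R ee i + t *\<^sub>R ee j) - f (p + t *\<^sub>R ee i) - f (p + t *\<^sub>R ee j) + f p) / t^2
       - pd j (pd i f) p\<bar> < e"
  proof (intro allI impI)
    fix t :: real assume t: "0 < t \<and> t < d"
    define \<phi> where "\<phi> s = f (p + t *\<^sub>R ee j + s *\<^sub>R ee i) - f (p + s *\<^sub>R ee i)" for s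
    have "\<exists>z. 0 < z \<and> z < t \<and> \<phi> t - \<phi> 0 = (t - 0) *
        (pd i (pds [] f) (p + t *\<^sub>R ee j + z *\<^sub>R ee i) - pd i (pds [] f) (p + z *\<^sub>R ee i))"
      unfolding \<phi>_def
    proof (rule MVT2)
      show "0 < t" using t by simp
      fix x assume x: "0 \<le> x" "x \<le> t"
      have u1: "p + t *\<^sub>R ee j + x *\<^sub>R ee i \<in> U"
        using inU[of x t t] x t by (simp add: add_ac)
      have u2: "p + x *\<^sub>R ee i \<in> U"
        proof -
        have "p + x *\<^sub>R ee i + 0 *\<^sub>R ee j \<in> U" by (rule inU(1)[of x t]) (use x t in auto)
        then show ?thesis by simp
      qed
      show "((\<lambda>s. f (p + t *\<^sub>R ee j + s *\<^sub>R ee i) - f (p + s *\<^sub>R ee i)) has_real_derivative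
         pd i (pds [] f) (p + t *\<^sub>R ee j + x *\<^sub>R ee i) - pd i (pds [] f) (p + x *\<^sub>R ee i)) (at x)"
        using DERIV_diff[OF line_deriv[where js="[]", OF sm u1] line_deriv[where js="[]", OF sm u2]] by simp
    qed
    then obtain \<xi> where xi: "0 < \<xi>" "\<xi> < t"
      "\<phi> t - \<phi> 0 = t * (pd i f (p + \<xi> *\<^sub>R ee i + t *\<^sub>R ee j) - pd i f (p + \<xi> *\<^sub>R ee i))"
      by (auto simp: add_ac)
    have "\<exists>z. 0 < z \<and> z < t \<and> pds [i] f (p + \<xi> *\<^sub>R ee i + t *\<^sub>R ee j) - pds [i] f (p + \<xi> *\<^sub>R ee i + 0 *\<^sub>R ee j)
       = (t - 0) * pd j (pds [i] f) (p + \<xi> *\<^sub>R ee i + z *\<^sub>R ee j)"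
    proof (rule MVT2)
      show "0 < t" using t by simp
      fix x assume x: "0 \<le> x" "x \<le> t"
      have u1: "p + \<xi> *\<^sub>R ee i + x *\<^sub>R ee j \<in> U"
        by (rule inU(1)[of _ t]) (use x t xi in auto)
      show "((\<lambda>s. pds [i] f (p + \<xi> *\<^sub>R ee i + s *\<^sub>R ee j)) has_real_derivative
         pd j (pds [i] f) (p + \<xi> *\<^sub>R ee i + x *\<^sub>R ee j)) (at x)"
        by (rule line_deriv[OF sm u1])
    qed
    then obtain \<eta> where eta: "0 < \<eta>" "\<eta> < t"
      "pd i f (p + \<xi> *\<^sub>R ee i + t *\<^sub>R ee j) - pd i f (p + \<xi> *\<^sub>R ee i)
       = t * pd j (pd i f) (p + \<xi> *\<^sub>R ee i + \<eta> *\<^sub>R ee j)"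
      by auto
    have Delta: "f (p + t *\<^sub>R ee i + t *\<^sub>R ee j) - f (p + t *\<^sub>R ee i) - f (p + t *\<^sub>R ee j) + f p
        = t^2 * pd j (pd i f) (p + \<xi> *\<^sub>R ee i + \<eta> *\<^sub>R ee j)"
    proof -
      have "f (p + t *\<^sub>R ee i + t *\<^sub>R ee j) - f (p + t *\<^sub>R ee i) - f (p + t *\<^sub>R ee j) + f p = \<phi> t - \<phi> 0"
        by (simp add: \<phi>_def add_ac)
      then show ?thesis using xi(3) eta(3) by (simp add: power2_eq_square)
    qed
    have "dist (p + \<xi> *\<^sub>R ee i + \<eta> *\<^sub>R ee j) p < \<delta>"
      by (rule inU(2)[of _ t]) (use xi eta t in auto)
    then have "\<bar>pd j (pd i f) (p + \<xi> *\<^sub>R ee i + \<eta> *\<^sub>R ee j) - pd j (pd i f) p\<bar> < e"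
      using dl(2) by (simp add: dist_real_def)
    then show "\<bar>(f (p + t *\<^sub>R ee i + t *\<^sub>R ee j) - f (p + t *\<^sub>R ee i) - f (p + t *\<^sub>R ee j) + f p) / t^2
       - pd j (pd i f) p\<bar> < e"
      using Delta t by simp
  qed
  then show ?thesis using d by blast
qed

lemma clairaut:
  assumes U: "open U" "p \<in> U" and sm: "smooth_on U f"
  shows "pd j (pd i f) p = pd i (pd j f) p"
proof (rule ccontr)
  assume ne: "pd j (pd i f) p \<noteq> pd i (pd j f) p"
  define e where "e = \<bar>pd j (pd i f) p - pd i (pd j f) p\<bar> / 2"
  have e: "e > 0" using ne by (simp add: e_def)
  obtain d1 where d1: "d1 > 0" "\<forall>t. 0 < t \<and> t < d1 \<longrightarrow>
    \<bar>(f (p + t *\<^sub>R ee i + t *\<^sub>R ee j) - f (p + t *\<^sub>R ee i) - f (p + t *\<^sub>R ee j) + f p) / t^2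
       - pd j (pd i f) p\<bar> < e" using clairaut_approx[OF U sm e, of i j] by blast
  obtain d2 where d2: "d2 > 0" "\<forall>t. 0 < t \<and> t < d2 \<longrightarrow>
    \<bar>(f (p + t *\<^sub>R ee j + t *\<^sub>R ee i) - f (p + t *\<^sub>R ee j) - f (p + t *\<^sub>R ee i) + f p) / t^2
       - pd i (pd j f) p\<bar> < e" using clairaut_approx[OF U sm e, of j i] by blast
  define t where "t = min d1 d2 / 2"
  have t: "0 < t" "t < d1" "t < d2" using d1 d2 by (auto simp: t_def)
  have eq: "f (p + t *\<^sub>R ee j + t *\<^sub>R ee i) - f (p + t *\<^sub>R ee j) - f (p + t *\<^sub>R ee i) + f p
    = f (p + t *\<^sub>R ee i + t *\<^sub>R ee j) - f (p + t *\<^sub>R ee i) - f (p + t *\<^sub>R ee j) + f p"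
    by (simp add: add_ac)
  have "\<bar>pd j (pd i f) p - pd i (pd j f) p\<bar> < 2 * e"
    using d1(2)[rule_format, of t] d2(2)[rule_format, of t] t unfolding eq by linarith
  then show False by (simp add: e_def)
qed



lemma gmat_diag: "gmat A B q = (\<chi> i j. if i = j then gd A B i q else 0)"
  by (simp add: vec_eq_iff gmat_eq)

lemma gd_pos: "\<forall>p\<in>U. A p > 0 \<and> B p > 0 \<Longrightarrow> q \<in> U \<Longrightarrow> gd A B k q > 0"
  by (simp add: gd_def)

lemma inv_gmat:
  assumes "\<forall>p\<in>U. A p > 0 \<and> B p > 0" "q \<in> U"
  shows "matrix_inv (gmat A B q) $ a $ b = (if a = b then 1 / gd A B a q else 0)"
proof -
  have "\<And>i. gd A B i q \<noteq> 0" by (simp add: gd_pos[OF assms, THEN less_imp_neq, THEN not_sym])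
  then show ?thesis unfolding gmat_diag by (subst diag_inv) auto
qed

lemma gtil_diag: "gtil (gmat A B) q = (\<chi> i j. if i = j then (if i = 3 then 1 else -1) * gd A B i q else 0)"
  unfolding gtil_def Pmat_eq gmat_diag
  by (simp add: matrix_matrix_mult_def vec_eq_iff sum_3 forall_3)

lemma inv_gtil:
  assumes "\<forall>p\<in>U. A p > 0 \<and> B p > 0" "q \<in> U"
  shows "matrix_inv (gtil (gmat A B) q) $ a $ b = (if a = b then (if a = 3 then 1 else -1) / gd A B a q else 0)"
proof -
  have "\<And>i. (if i = 3 then 1 else -1) * gd A B i q \<noteq> 0" by (simp add: gd_pos[OF assms, THEN less_imp_neq, THEN not_sym])
  then show ?thesis unfolding gtil_diag by (subst diag_inv) auto
qed

lemma pd_entry: "pd i (\<lambda>q. gmat A B q $ j $ l) q = (if j = l then pd i (gd A B j) q else 0)"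
  by (cases "j = l") (simp_all add: gmat_eq pd_const)

lemma chr_eq:
  assumes "\<forall>p\<in>U. A p > 0 \<and> B p > 0" "q \<in> U"
  shows "chr (gmat A B) k i j q =
    ((if j = k then pd i (gd A B k) q else 0) + (if i = k then pd j (gd A B k) q else 0)
     - (if i = j then pd k (gd A B i) q else 0)) / (2 * gd A B k q)"
  unfolding chr_def inv_gmat[OF assms] pd_entry
  by (simp add: if_distrib[of "\<lambda>x. x * _"] sum.delta cong: if_cong)



definition ind :: "bool \<Rightarrow> real" where "ind b = (if b then 1 else 0)"

lemma chr_eq2:
  assumes "\<forall>p\<in>U. A p > 0 \<and> B p > 0" "q \<in> U"
  shows "chr (gmat A B) k i j q =
    (ind (j = k) * pd i (gd A B k) q + ind (i = k) * pd j (gd A B k) q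
     - ind (i = j) * pd k (gd A B i) q) / (2 * gd A B k q)"
  unfolding chr_eq[OF assms] by (simp add: ind_def)

lemma smooth_gd: "smooth_on U A \<Longrightarrow> smooth_on U B \<Longrightarrow> smooth_on U (gd A B k)"
  by (simp add: gd_def)

lemma pdchr:
  assumes pos: "\<forall>p\<in>U. A p > 0 \<and> B p > 0" and U: "open U" "p \<in> U"
    and sA: "smooth_on U A" and sB: "smooth_on U B"
  shows "pd m (chr (gmat A B) k i j) p =
    ((ind (j = k) * pd m (pd i (gd A B k)) p + ind (i = k) * pd m (pd j (gd A B k)) p
       - ind (i = j) * pd m (pd k (gd A B i)) p) * (2 * gd A B k p)
     - (ind (j = k) * pd i (gd A B k) p + ind (i = k) * pd j (gd A B k) p
     - ind (i = j) * pd k (gd A B i) p) * (2 * pd m (gd A B k) p)) / ((2 * gd A B k p) * (2 * gd A B k p))"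
proof -
  have "pd m (chr (gmat A B) k i j) p = pd m (\<lambda>q. (ind (j = k) * pd i (gd A B k) q + ind (i = k) * pd j (gd A B k) q
     - ind (i = j) * pd k (gd A B i) q) / (2 * gd A B k q)) p"
    by (rule pd_local[OF U]) (rule chr_eq2[OF pos])
  also have "\<dots> = ((ind (j = k) * pd m (pd i (gd A B k)) p + ind (i = k) * pd m (pd j (gd A B k)) p
       - ind (i = j) * pd m (pd k (gd A B i)) p) * (2 * gd A B k p)
     - (ind (j = k) * pd i (gd A B k) p + ind (i = k) * pd j (gd A B k) p
     - ind (i = j) * pd k (gd A B i) p) * (2 * pd m (gd A B k) p)) / ((2 * gd A B k p) * (2 * gd A B k p))"
  proof (rule hasd_pd, rule hasd_divide)
    have g: "\<And>k. smooth_on U (gd A B k)" using sA sB by (rule smooth_gd)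
    show "hasd m (\<lambda>q. ind (j = k) * pd i (gd A B k) q + ind (i = k) * pd j (gd A B k) q
     - ind (i = j) * pd k (gd A B i) q) p (ind (j = k) * pd m (pd i (gd A B k)) p + ind (i = k) * pd m (pd j (gd A B k)) p
       - ind (i = j) * pd m (pd k (gd A B i)) p)"
      by (intro hasd_diff hasd_add hasd_cmult smooth_hasd1[OF g U(2)])
    show "hasd m (\<lambda>q. 2 * gd A B k q) p (2 * pd m (gd A B k) p)"
      by (intro hasd_cmult smooth_hasd0[OF g U(2)])
    show "2 * gd A B k p \<noteq> 0" using gd_pos[OF pos U(2), of k] by simp
  qed
  finally show ?thesis .
qed

definition RHSX :: "(pt \<Rightarrow> real) \<Rightarrow> (pt \<Rightarrow> real) \<Rightarrow> pt \<Rightarrow> 3 \<Rightarrow> 3 \<Rightarrow> 3 \<Rightarrow> 3 \<Rightarrow> real" where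
  "RHSX A B p x y z u = ricci (gmat A B) y z p * gmat A B p $x$u + ricci (gmat A B) x u p * gmat A B p $y$z
   - ricci (gmat A B) x z p * gmat A B p $y$u - ricci (gmat A B) y u p * gmat A B p $x$z
   - scal (gmat A B) p / 2 * pi1 (gmat A B p) x y z u"



lemma Rup_anti: "Rup G j i k l q = - Rup G i j k l q"
  unfolding Rup_def sum_subtractf by simp

lemma Rlow_anti: "Rlow G j i k l q = - Rlow G i j k l q"
  unfolding Rlow_def Rup_anti[of G j i] by (simp add: sum_negf)

lemma RHS_anti: "RHSX A B p y x z u = - RHSX A B p x y z u"
  by (simp add: RHSX_def pi1_def algebra_simps)



context
  fixes U :: "pt set" and A B :: "pt \<Rightarrow> real" and p :: pt
  assumes pos: "\<forall>p\<in>U. A p > 0 \<and> B p > 0" and U: "open U" "p \<in> U"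
    and sA: "smooth_on U A" and sB: "smooth_on U B"
begin

lemma Rlow_eq: "Rlow (gmat A B) x y z u p = Rup (gmat A B) x y z u p * gd A B u p"
  unfolding Rlow_def gmat_eq by (simp add: if_distrib[of "\<lambda>x. _ * x"] sum.delta cong: if_cong)

lemma ricci_eq: "ricci (gmat A B) j k p = Rup (gmat A B) 1 j k 1 p + Rup (gmat A B) 2 j k 2 p + Rup (gmat A B) 3 j k 3 p"
proof -
  have "\<And>a. gd A B a p \<noteq> 0" using gd_pos[OF pos U(2)] by (metis less_irrefl)
  then show ?thesis
  unfolding ricci_def inv_gmat[OF pos U(2)] Rlow_eq
  by (simp add: if_distrib[of "\<lambda>x. x * _"] sum.delta sum_3 cong: if_cong)
qed

lemma scal_eq: "scal (gmat A B) p = ricci (gmat A B) 1 1 p / gd A B 1 p + ricci (gmat A B) 2 2 p / gd A B 2 p + ricci (gmat A B) 3 3 p / gd A B 3 p"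
  unfolding scal_def inv_gmat[OF pos U(2)]
  by (simp add: if_distrib[of "\<lambda>x. x * _"] sum.delta sum_3 cong: if_cong)

lemma scal_star_eq: "scal_star (gmat A B) p = - ricci (gmat A B) 1 1 p / gd A B 1 p - ricci (gmat A B) 2 2 p / gd A B 2 p + ricci (gmat A B) 3 3 p / gd A B 3 p"
  unfolding scal_star_def inv_gtil[OF pos U(2)]
  by (simp add: if_distrib[of "\<lambda>x. x * _"] sum.delta sum_3 cong: if_cong)

lemmas cl = clairaut[OF U sA] clairaut[OF U sB]

lemma Rup_eval: "Rup (gmat A B) i j k l p = pd i (chr (gmat A B) l j k) p - pd j (chr (gmat A B) l i k) p +
   (\<Sum>m\<in>UNIV. chr (gmat A B) m j k p * chr (gmat A B) l i m p - chr (gmat A B) m i k p * chr (gmat A B) l j m p)"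
  by (simp add: Rup_def)

lemma case_1211: "Rlow (gmat A B) 1 2 1 1 p = RHSX A B p 1 2 1 1"
proof -
  have a: "A p > 0" "B p > 0" using pos U by auto
  note c1 = cl(1)[of 1 2] cl(1)[of 1 3] cl(1)[of 2 3] cl(2)[of 1 2] cl(2)[of 1 3] cl(2)[of 2 3]
  show ?thesis
  unfolding RHSX_def scal_eq ricci_eq Rlow_eq pi1_def gmat_eq
  using a by (simp add: Rup_def sum_3 chr_eq2[OF pos U(2)] pdchr[OF pos U sA sB] ind_def gd_def c1; simp add: field_simps)
qed

lemma case_1212: "Rlow (gmat A B) 1 2 1 2 p = RHSX A B p 1 2 1 2"
proof -
  have a: "A p > 0" "B p > 0" using pos U by auto
  note c1 = cl(1)[of 1 2] cl(1)[of 1 3] cl(1)[of 2 3] cl(2)[of 1 2] cl(2)[of 1 3] cl(2)[of 2 3]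
  show ?thesis
  unfolding RHSX_def scal_eq ricci_eq Rlow_eq pi1_def gmat_eq
  using a by (simp add: Rup_def sum_3 chr_eq2[OF pos U(2)] pdchr[OF pos U sA sB] ind_def gd_def c1; simp add: field_simps)
qed

lemma case_1213: "Rlow (gmat A B) 1 2 1 3 p = RHSX A B p 1 2 1 3"
proof -
  have a: "A p > 0" "B p > 0" using pos U by auto
  note c1 = cl(1)[of 1 2] cl(1)[of 1 3] cl(1)[of 2 3] cl(2)[of 1 2] cl(2)[of 1 3] cl(2)[of 2 3]
  show ?thesis
  unfolding RHSX_def scal_eq ricci_eq Rlow_eq pi1_def gmat_eq
  using a by (simp add: Rup_def sum_3 chr_eq2[OF pos U(2)] pdchr[OF pos U sA sB] ind_def gd_def c1; simp add: field_simps)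
qed

lemma case_1221: "Rlow (gmat A B) 1 2 2 1 p = RHSX A B p 1 2 2 1"
proof -
  have a: "A p > 0" "B p > 0" using pos U by auto
  note c1 = cl(1)[of 1 2] cl(1)[of 1 3] cl(1)[of 2 3] cl(2)[of 1 2] cl(2)[of 1 3] cl(2)[of 2 3]
  show ?thesis
  unfolding RHSX_def scal_eq ricci_eq Rlow_eq pi1_def gmat_eq
  using a by (simp add: Rup_def sum_3 chr_eq2[OF pos U(2)] pdchr[OF pos U sA sB] ind_def gd_def c1; simp add: field_simps)
qed

lemma case_1222: "Rlow (gmat A B) 1 2 2 2 p = RHSX A B p 1 2 2 2"
proof -
  have a: "A p > 0" "B p > 0" using pos U by auto
  note c1 = cl(1)[of 1 2] cl(1)[of 1 3] cl(1)[of 2 3] cl(2)[of 1 2] cl(2)[of 1 3] cl(2)[of 2 3]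
  show ?thesis
  unfolding RHSX_def scal_eq ricci_eq Rlow_eq pi1_def gmat_eq
  using a by (simp add: Rup_def sum_3 chr_eq2[OF pos U(2)] pdchr[OF pos U sA sB] ind_def gd_def c1; simp add: field_simps)
qed

lemma case_1223: "Rlow (gmat A B) 1 2 2 3 p = RHSX A B p 1 2 2 3"
proof -
  have a: "A p > 0" "B p > 0" using pos U by auto
  note c1 = cl(1)[of 1 2] cl(1)[of 1 3] cl(1)[of 2 3] cl(2)[of 1 2] cl(2)[of 1 3] cl(2)[of 2 3]
  show ?thesis
  unfolding RHSX_def scal_eq ricci_eq Rlow_eq pi1_def gmat_eq
  using a by (simp add: Rup_def sum_3 chr_eq2[OF pos U(2)] pdchr[OF pos U sA sB] ind_def gd_def c1; simp add: field_simps)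
qed

lemma case_1231: "Rlow (gmat A B) 1 2 3 1 p = RHSX A B p 1 2 3 1"
proof -
  have a: "A p > 0" "B p > 0" using pos U by auto
  note c1 = cl(1)[of 1 2] cl(1)[of 1 3] cl(1)[of 2 3] cl(2)[of 1 2] cl(2)[of 1 3] cl(2)[of 2 3]
  show ?thesis
  unfolding RHSX_def scal_eq ricci_eq Rlow_eq pi1_def gmat_eq
  using a by (simp add: Rup_def sum_3 chr_eq2[OF pos U(2)] pdchr[OF pos U sA sB] ind_def gd_def c1; simp add: field_simps)
qed

lemma case_1232: "Rlow (gmat A B) 1 2 3 2 p = RHSX A B p 1 2 3 2"
proof -
  have a: "A p > 0" "B p > 0" using pos U by auto
  note c1 = cl(1)[of 1 2] cl(1)[of 1 3] cl(1)[of 2 3] cl(2)[of 1 2] cl(2)[of 1 3] cl(2)[of 2 3]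
  show ?thesis
  unfolding RHSX_def scal_eq ricci_eq Rlow_eq pi1_def gmat_eq
  using a by (simp add: Rup_def sum_3 chr_eq2[OF pos U(2)] pdchr[OF pos U sA sB] ind_def gd_def c1; simp add: field_simps)
qed

lemma case_1233: "Rlow (gmat A B) 1 2 3 3 p = RHSX A B p 1 2 3 3"
proof -
  have a: "A p > 0" "B p > 0" using pos U by auto
  note c1 = cl(1)[of 1 2] cl(1)[of 1 3] cl(1)[of 2 3] cl(2)[of 1 2] cl(2)[of 1 3] cl(2)[of 2 3]
  show ?thesis
  unfolding RHSX_def scal_eq ricci_eq Rlow_eq pi1_def gmat_eq
  using a by (simp add: Rup_def sum_3 chr_eq2[OF pos U(2)] pdchr[OF pos U sA sB] ind_def gd_def c1; simp add: field_simps)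
qed

lemma case_1311: "Rlow (gmat A B) 1 3 1 1 p = RHSX A B p 1 3 1 1"
proof -
  have a: "A p > 0" "B p > 0" using pos U by auto
  note c1 = cl(1)[of 1 2] cl(1)[of 1 3] cl(1)[of 2 3] cl(2)[of 1 2] cl(2)[of 1 3] cl(2)[of 2 3]
  show ?thesis
  unfolding RHSX_def scal_eq ricci_eq Rlow_eq pi1_def gmat_eq
  using a by (simp add: Rup_def sum_3 chr_eq2[OF pos U(2)] pdchr[OF pos U sA sB] ind_def gd_def c1; simp add: field_simps)
qed

lemma case_1312: "Rlow (gmat A B) 1 3 1 2 p = RHSX A B p 1 3 1 2"
proof -
  have a: "A p > 0" "B p > 0" using pos U by auto
  note c1 = cl(1)[of 1 2] cl(1)[of 1 3] cl(1)[of 2 3] cl(2)[of 1 2] cl(2)[of 1 3] cl(2)[of 2 3]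
  show ?thesis
  unfolding RHSX_def scal_eq ricci_eq Rlow_eq pi1_def gmat_eq
  using a by (simp add: Rup_def sum_3 chr_eq2[OF pos U(2)] pdchr[OF pos U sA sB] ind_def gd_def c1; simp add: field_simps)
qed

lemma case_1313: "Rlow (gmat A B) 1 3 1 3 p = RHSX A B p 1 3 1 3"
proof -
  have a: "A p > 0" "B p > 0" using pos U by auto
  note c1 = cl(1)[of 1 2] cl(1)[of 1 3] cl(1)[of 2 3] cl(2)[of 1 2] cl(2)[of 1 3] cl(2)[of 2 3]
  show ?thesis
  unfolding RHSX_def scal_eq ricci_eq Rlow_eq pi1_def gmat_eq
  using a by (simp add: Rup_def sum_3 chr_eq2[OF pos U(2)] pdchr[OF pos U sA sB] ind_def gd_def c1; simp add: field_simps)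
qed

lemma case_1321: "Rlow (gmat A B) 1 3 2 1 p = RHSX A B p 1 3 2 1"
proof -
  have a: "A p > 0" "B p > 0" using pos U by auto
  note c1 = cl(1)[of 1 2] cl(1)[of 1 3] cl(1)[of 2 3] cl(2)[of 1 2] cl(2)[of 1 3] cl(2)[of 2 3]
  show ?thesis
  unfolding RHSX_def scal_eq ricci_eq Rlow_eq pi1_def gmat_eq
  using a by (simp add: Rup_def sum_3 chr_eq2[OF pos U(2)] pdchr[OF pos U sA sB] ind_def gd_def c1; simp add: field_simps)
qed

lemma case_1322: "Rlow (gmat A B) 1 3 2 2 p = RHSX A B p 1 3 2 2"
proof -
  have a: "A p > 0" "B p > 0" using pos U by auto
  note c1 = cl(1)[of 1 2] cl(1)[of 1 3] cl(1)[of 2 3] cl(2)[of 1 2] cl(2)[of 1 3] cl(2)[of 2 3]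
  show ?thesis
  unfolding RHSX_def scal_eq ricci_eq Rlow_eq pi1_def gmat_eq
  using a by (simp add: Rup_def sum_3 chr_eq2[OF pos U(2)] pdchr[OF pos U sA sB] ind_def gd_def c1; simp add: field_simps)
qed

lemma case_1323: "Rlow (gmat A B) 1 3 2 3 p = RHSX A B p 1 3 2 3"
proof -
  have a: "A p > 0" "B p > 0" using pos U by auto
  note c1 = cl(1)[of 1 2] cl(1)[of 1 3] cl(1)[of 2 3] cl(2)[of 1 2] cl(2)[of 1 3] cl(2)[of 2 3]
  show ?thesis
  unfolding RHSX_def scal_eq ricci_eq Rlow_eq pi1_def gmat_eq
  using a by (simp add: Rup_def sum_3 chr_eq2[OF pos U(2)] pdchr[OF pos U sA sB] ind_def gd_def c1; simp add: field_simps)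
qed

lemma case_1331: "Rlow (gmat A B) 1 3 3 1 p = RHSX A B p 1 3 3 1"
proof -
  have a: "A p > 0" "B p > 0" using pos U by auto
  note c1 = cl(1)[of 1 2] cl(1)[of 1 3] cl(1)[of 2 3] cl(2)[of 1 2] cl(2)[of 1 3] cl(2)[of 2 3]
  show ?thesis
  unfolding RHSX_def scal_eq ricci_eq Rlow_eq pi1_def gmat_eq
  using a by (simp add: Rup_def sum_3 chr_eq2[OF pos U(2)] pdchr[OF pos U sA sB] ind_def gd_def c1; simp add: field_simps)
qed

lemma case_1332: "Rlow (gmat A B) 1 3 3 2 p = RHSX A B p 1 3 3 2"
proof -
  have a: "A p > 0" "B p > 0" using pos U by auto
  note c1 = cl(1)[of 1 2] cl(1)[of 1 3] cl(1)[of 2 3] cl(2)[of 1 2] cl(2)[of 1 3] cl(2)[of 2 3]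
  show ?thesis
  unfolding RHSX_def scal_eq ricci_eq Rlow_eq pi1_def gmat_eq
  using a by (simp add: Rup_def sum_3 chr_eq2[OF pos U(2)] pdchr[OF pos U sA sB] ind_def gd_def c1; simp add: field_simps)
qed

lemma case_1333: "Rlow (gmat A B) 1 3 3 3 p = RHSX A B p 1 3 3 3"
proof -
  have a: "A p > 0" "B p > 0" using pos U by auto
  note c1 = cl(1)[of 1 2] cl(1)[of 1 3] cl(1)[of 2 3] cl(2)[of 1 2] cl(2)[of 1 3] cl(2)[of 2 3]
  show ?thesis
  unfolding RHSX_def scal_eq ricci_eq Rlow_eq pi1_def gmat_eq
  using a by (simp add: Rup_def sum_3 chr_eq2[OF pos U(2)] pdchr[OF pos U sA sB] ind_def gd_def c1; simp add: field_simps)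
qed

lemma case_2311: "Rlow (gmat A B) 2 3 1 1 p = RHSX A B p 2 3 1 1"
proof -
  have a: "A p > 0" "B p > 0" using pos U by auto
  note c1 = cl(1)[of 1 2] cl(1)[of 1 3] cl(1)[of 2 3] cl(2)[of 1 2] cl(2)[of 1 3] cl(2)[of 2 3]
  show ?thesis
  unfolding RHSX_def scal_eq ricci_eq Rlow_eq pi1_def gmat_eq
  using a by (simp add: Rup_def sum_3 chr_eq2[OF pos U(2)] pdchr[OF pos U sA sB] ind_def gd_def c1; simp add: field_simps)
qed

lemma case_2312: "Rlow (gmat A B) 2 3 1 2 p = RHSX A B p 2 3 1 2"
proof -
  have a: "A p > 0" "B p > 0" using pos U by auto
  note c1 = cl(1)[of 1 2] cl(1)[of 1 3] cl(1)[of 2 3] cl(2)[of 1 2] cl(2)[of 1 3] cl(2)[of 2 3]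
  show ?thesis
  unfolding RHSX_def scal_eq ricci_eq Rlow_eq pi1_def gmat_eq
  using a by (simp add: Rup_def sum_3 chr_eq2[OF pos U(2)] pdchr[OF pos U sA sB] ind_def gd_def c1; simp add: field_simps)
qed

lemma case_2313: "Rlow (gmat A B) 2 3 1 3 p = RHSX A B p 2 3 1 3"
proof -
  have a: "A p > 0" "B p > 0" using pos U by auto
  note c1 = cl(1)[of 1 2] cl(1)[of 1 3] cl(1)[of 2 3] cl(2)[of 1 2] cl(2)[of 1 3] cl(2)[of 2 3]
  show ?thesis
  unfolding RHSX_def scal_eq ricci_eq Rlow_eq pi1_def gmat_eq
  using a by (simp add: Rup_def sum_3 chr_eq2[OF pos U(2)] pdchr[OF pos U sA sB] ind_def gd_def c1; simp add: field_simps)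
qed

lemma case_2321: "Rlow (gmat A B) 2 3 2 1 p = RHSX A B p 2 3 2 1"
proof -
  have a: "A p > 0" "B p > 0" using pos U by auto
  note c1 = cl(1)[of 1 2] cl(1)[of 1 3] cl(1)[of 2 3] cl(2)[of 1 2] cl(2)[of 1 3] cl(2)[of 2 3]
  show ?thesis
  unfolding RHSX_def scal_eq ricci_eq Rlow_eq pi1_def gmat_eq
  using a by (simp add: Rup_def sum_3 chr_eq2[OF pos U(2)] pdchr[OF pos U sA sB] ind_def gd_def c1; simp add: field_simps)
qed

lemma case_2322: "Rlow (gmat A B) 2 3 2 2 p = RHSX A B p 2 3 2 2"
proof -
  have a: "A p > 0" "B p > 0" using pos U by auto
  note c1 = cl(1)[of 1 2] cl(1)[of 1 3] cl(1)[of 2 3] cl(2)[of 1 2] cl(2)[of 1 3] cl(2)[of 2 3]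
  show ?thesis
  unfolding RHSX_def scal_eq ricci_eq Rlow_eq pi1_def gmat_eq
  using a by (simp add: Rup_def sum_3 chr_eq2[OF pos U(2)] pdchr[OF pos U sA sB] ind_def gd_def c1; simp add: field_simps)
qed

lemma case_2323: "Rlow (gmat A B) 2 3 2 3 p = RHSX A B p 2 3 2 3"
proof -
  have a: "A p > 0" "B p > 0" using pos U by auto
  note c1 = cl(1)[of 1 2] cl(1)[of 1 3] cl(1)[of 2 3] cl(2)[of 1 2] cl(2)[of 1 3] cl(2)[of 2 3]
  show ?thesis
  unfolding RHSX_def scal_eq ricci_eq Rlow_eq pi1_def gmat_eq
  using a by (simp add: Rup_def sum_3 chr_eq2[OF pos U(2)] pdchr[OF pos U sA sB] ind_def gd_def c1; simp add: field_simps)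
qed

lemma case_2331: "Rlow (gmat A B) 2 3 3 1 p = RHSX A B p 2 3 3 1"
proof -
  have a: "A p > 0" "B p > 0" using pos U by auto
  note c1 = cl(1)[of 1 2] cl(1)[of 1 3] cl(1)[of 2 3] cl(2)[of 1 2] cl(2)[of 1 3] cl(2)[of 2 3]
  show ?thesis
  unfolding RHSX_def scal_eq ricci_eq Rlow_eq pi1_def gmat_eq
  using a by (simp add: Rup_def sum_3 chr_eq2[OF pos U(2)] pdchr[OF pos U sA sB] ind_def gd_def c1; simp add: field_simps)
qed

lemma case_2332: "Rlow (gmat A B) 2 3 3 2 p = RHSX A B p 2 3 3 2"
proof -
  have a: "A p > 0" "B p > 0" using pos U by auto
  note c1 = cl(1)[of 1 2] cl(1)[of 1 3] cl(1)[of 2 3] cl(2)[of 1 2] cl(2)[of 1 3] cl(2)[of 2 3]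
  show ?thesis
  unfolding RHSX_def scal_eq ricci_eq Rlow_eq pi1_def gmat_eq
  using a by (simp add: Rup_def sum_3 chr_eq2[OF pos U(2)] pdchr[OF pos U sA sB] ind_def gd_def c1; simp add: field_simps)
qed

lemma case_2333: "Rlow (gmat A B) 2 3 3 3 p = RHSX A B p 2 3 3 3"
proof -
  have a: "A p > 0" "B p > 0" using pos U by auto
  note c1 = cl(1)[of 1 2] cl(1)[of 1 3] cl(1)[of 2 3] cl(2)[of 1 2] cl(2)[of 1 3] cl(2)[of 2 3]
  show ?thesis
  unfolding RHSX_def scal_eq ricci_eq Rlow_eq pi1_def gmat_eq
  using a by (simp add: Rup_def sum_3 chr_eq2[OF pos U(2)] pdchr[OF pos U sA sB] ind_def gd_def c1; simp add: field_simps)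
qed

lemma key3d:
"Rlow (gmat A B) x y z u p = RHSX A B p x y z u"
proof -
  have diag: "Rlow (gmat A B) x x z u p = RHSX A B p x x z u" for x z u
    using Rlow_anti[of "gmat A B" x x z u p] RHS_anti[of A B p x x z u] by simp
  have c12: "Rlow (gmat A B) 1 2 z u p = RHSX A B p 1 2 z u" for z u
    using exhaust_3[of z] exhaust_3[of u] by (elim disjE) (simp_all add: case_1211 case_1212 case_1213 case_1221 case_1222 case_1223 case_1231 case_1232 case_1233)
  have c13: "Rlow (gmat A B) 1 3 z u p = RHSX A B p 1 3 z u" for z u
    using exhaust_3[of z] exhaust_3[of u] by (elim disjE) (simp_all add: case_1311 case_1312 case_1313 case_1321 case_1322 case_1323 case_1331 case_1332 case_1333)
  have c23: "Rlow (gmat A B) 2 3 z u p = RHSX A B p 2 3 z u" for z u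
    using exhaust_3[of z] exhaust_3[of u] by (elim disjE) (simp_all add: case_2311 case_2312 case_2313 case_2321 case_2322 case_2323 case_2331 case_2332 case_2333)
  have sw: "Rlow (gmat A B) y x z u p = RHSX A B p y x z u" if "Rlow (gmat A B) x y z u p = RHSX A B p x y z u" for x y
    using that Rlow_anti[of "gmat A B" x y z u p] RHS_anti[of A B p y x z u] by simp
  show ?thesis
    using exhaust_3[of x] exhaust_3[of y]
    by (elim disjE) (simp_all add: diag c12 c13 c23 sw[OF c12] sw[OF c13] sw[OF c23])
qed


end

theorem theorem5p9:
  fixes U :: "(real^3) set" and A B :: "real^3 \<Rightarrow> real"
  assumes "open U"
    and "smooth_on U A" and "smooth_on U B"
    and "\<forall>p\<in>U. A p > 0 \<and> B p > 0"
    and "\<forall>p\<in>U. \<forall>j k. ricci (gmat A B) j k p =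
           (3 * scal (gmat A B) p + scal_star (gmat A B) p) / 8 * gmat A B p $ j $ k
         + (3 * scal_star (gmat A B) p + scal (gmat A B) p) / 8 * gtil (gmat A B) p $ j $ k"
  shows "\<forall>p\<in>U. \<forall>x y z u. Rlow (gmat A B) x y z u p =
           (scal (gmat A B) p + scal_star (gmat A B) p) / 4 * pi1 (gmat A B p) x y z u
         + (3 * scal_star (gmat A B) p + scal (gmat A B) p) / 8
             * pi2 (gmat A B p) (gtil (gmat A B) p) x y z u"
proof (intro ballI allI)
  fix p x y z u assume p: "p \<in> U"
  have k: "Rlow (gmat A B) x y z u p = RHSX A B p x y z u"
    by (rule key3d[OF assms(4,1) p assms(2,3)])
  have h: "\<And>j k. ricci (gmat A B) j k p =
           (3 * scal (gmat A B) p + scal_star (gmat A B) p) / 8 * gmat A B p $ j $ k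
         + (3 * scal_star (gmat A B) p + scal (gmat A B) p) / 8 * gtil (gmat A B) p $ j $ k"
    using assms(5) p by blast
  show "Rlow (gmat A B) x y z u p =
           (scal (gmat A B) p + scal_star (gmat A B) p) / 4 * pi1 (gmat A B p) x y z u
         + (3 * scal_star (gmat A B) p + scal (gmat A B) p) / 8
             * pi2 (gmat A B p) (gtil (gmat A B) p) x y z u"
    unfolding k RHSX_def h pi1_def pi2_def
    by (simp add: field_simps)
qed

end
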